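(* Let $k_1,k_2,k_3\ge1$, let $G$ be the grid graph on $\{0,\dots,k_1\}\times\{0,\dots,k_2\}\times\{0,\dots,k_3\}$ (adjacency: differing by $1$ in exactly one coordinate), let $\mathcal B=\{B_1,\dots,B_m\}$ with $B_i=[a_i',a_i'']\times[b_i',b_i'']\times[c_i',c_i'']\subseteq\mathbb R^3$ boxes with integer endpoints $0\le a_i'<a_i''\le k_1$, $0\le b_i'<b_i''\le k_2$, $0\le c_i'<c_i''\le k_3$, and let $G_i$ be the subgraph of $G$ induced by the vertices in $B_i$. Let $\widetilde G$ be the graph with vertex set $V(G)\cup\{(u,i):1\le i\le m,\ u\in V(G_i)\}$ and edges: all edges of $G$; the edges $(u,i)(w,i)$ for $uw$ an edge of $G_i$; and the edges $u\,(u,i)$ for $u\in V(G_i)$. Let $\alpha=(0,0,0)$ and let $\omega=\omega(\mathcal B)$ be the maximum number of pairwise intersecting boxes of $\mathcal B$. Then every vertex of the pointed median graph $\widetilde G_\alpha$ has out-degree at most $\omega+3$. In particular, the maximum degree of $\widetilde G$ is at most $\omega+6$ and the clique number of the pointed contact graph $\Gamma_\alpha(\widetilde G)$ is at most $\omega+3$.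
   Context: $\widetilde G$ is a median graph (connected, with $I(x,y)\cap I(y,z)\cap I(z,x)$ a single vertex for all $x,y,z$, where $I(u,v)$ is the set of vertices on shortest $u$–$v$ paths). The pointed median graph $\widetilde G_\alpha$ is $\widetilde G$ with each edge $xy$ directed from $x$ to $y$ iff $d(x,\alpha)<d(y,\alpha)$, $d$ the graph distance; the tail is the origin. The Djoković–Winkler relation $\Theta$: $xy\,\Theta\,zw$ iff $d(x,z)+d(y,w)\ne d(x,w)+d(y,z)$, an equivalence relation on edges of a median graph. Two $\Theta$-classes cross if some 4-cycle has two opposite edges in one and the other two in the other. The pointed contact graph $\Gamma_\alpha(\widetilde G)$ has the $\Theta$-classes as vertices, two distinct classes adjacent iff they cross or there exist edges, one from each class, which (directed as in $\widetilde G_\alpha$) have the same origin and lie in no common 4-cycle. *)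

theory Defs
  imports Complex_Main
begin

type_synonym pt = "int \<times> int \<times> int"
type_synonym box = "pt \<times> pt"   (* ((a',b',c'),(a'',b'',c'')) *)
type_synonym vtx = "pt \<times> nat option"  (* (u,None) = u in V(G); (u,Some i) = copy (u,i) *)

definition grid_V :: "int \<Rightarrow> int \<Rightarrow> int \<Rightarrow> pt set" where
  "grid_V k1 k2 k3 = {(x,y,z). 0 \<le> x \<and> x \<le> k1 \<and> 0 \<le> y \<and> y \<le> k2 \<and> 0 \<le> z \<and> z \<le> k3}"

definition grid_adj :: "pt \<Rightarrow> pt \<Rightarrow> bool" where
  "grid_adj u v = (case u of (x,y,z) \<Rightarrow> case v of (x',y',z') \<Rightarrow>
      (\<bar>x - x'\<bar> = 1 \<and> y = y' \<and> z = z') \<or>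
      (x = x' \<and> \<bar>y - y'\<bar> = 1 \<and> z = z') \<or>
      (x = x' \<and> y = y' \<and> \<bar>z - z'\<bar> = 1))"

definition valid_box :: "int \<Rightarrow> int \<Rightarrow> int \<Rightarrow> box \<Rightarrow> bool" where
  "valid_box k1 k2 k3 b = (case b of ((a1,b1,c1),(a2,b2,c2)) \<Rightarrow>
      0 \<le> a1 \<and> a1 < a2 \<and> a2 \<le> k1 \<and>
      0 \<le> b1 \<and> b1 < b2 \<and> b2 \<le> k2 \<and>
      0 \<le> c1 \<and> c1 < c2 \<and> c2 \<le> k3)"

definition box_set :: "box \<Rightarrow> (real \<times> real \<times> real) set" where
  "box_set b = (case b of ((a1,b1,c1),(a2,b2,c2)) \<Rightarrow>
      {(x,y,z). of_int a1 \<le> x \<and> x \<le> of_int a2 \<and>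
                of_int b1 \<le> y \<and> y \<le> of_int b2 \<and>
                of_int c1 \<le> z \<and> z \<le> of_int c2})"

definition pt_real :: "pt \<Rightarrow> real \<times> real \<times> real" where
  "pt_real u = (case u of (x,y,z) \<Rightarrow> (of_int x, of_int y, of_int z))"

definition box_pts :: "int \<Rightarrow> int \<Rightarrow> int \<Rightarrow> box \<Rightarrow> pt set" where
  "box_pts k1 k2 k3 b = {u \<in> grid_V k1 k2 k3. pt_real u \<in> box_set b}"

definition omega :: "box list \<Rightarrow> nat" where
  "omega B = Max {card I | I. I \<subseteq> {..<length B} \<and>
      (\<forall>i\<in>I. \<forall>j\<in>I. i \<noteq> j \<longrightarrow> box_set (B!i) \<inter> box_set (B!j) \<noteq> {})}"

definition tV :: "int \<Rightarrow> int \<Rightarrow> int \<Rightarrow> box list \<Rightarrow> vtx set" where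
  "tV k1 k2 k3 B = {(u, None) | u. u \<in> grid_V k1 k2 k3} \<union>
     {(u, Some i) | u i. i < length B \<and> u \<in> box_pts k1 k2 k3 (B!i)}"

definition tadj :: "int \<Rightarrow> int \<Rightarrow> int \<Rightarrow> box list \<Rightarrow> vtx \<Rightarrow> vtx \<Rightarrow> bool" where
  "tadj k1 k2 k3 B v w = (v \<in> tV k1 k2 k3 B \<and> w \<in> tV k1 k2 k3 B \<and>
     (case v of
        (u, None) \<Rightarrow> (case w of (u', None) \<Rightarrow> grid_adj u u' | (u', Some j) \<Rightarrow> u = u')
      | (u, Some i) \<Rightarrow> (case w of (u', None) \<Rightarrow> u = u' | (u', Some j) \<Rightarrow> i = j \<and> grid_adj u u')))"

definition gdist :: "('a \<Rightarrow> 'a \<Rightarrow> bool) \<Rightarrow> 'a \<Rightarrow> 'a \<Rightarrow> nat" where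
  "gdist adj x y = (LEAST n. \<exists>p. length p = Suc n \<and> hd p = x \<and> last p = y \<and>
       (\<forall>i<n. adj (p!i) (p!Suc i)))"

definition degree :: "('a \<Rightarrow> 'a \<Rightarrow> bool) \<Rightarrow> 'a \<Rightarrow> nat" where
  "degree adj x = card {y. adj x y}"

definition out_deg :: "('a \<Rightarrow> 'a \<Rightarrow> bool) \<Rightarrow> 'a \<Rightarrow> 'a \<Rightarrow> nat" where
  "out_deg adj a x = card {y. adj x y \<and> gdist adj x a < gdist adj y a}"

text \<open>Edges are represented as ordered pairs (both orientations present).\<close>
definition dedges :: "('a \<Rightarrow> 'a \<Rightarrow> bool) \<Rightarrow> ('a \<times> 'a) set" where
  "dedges adj = {(x,y). adj x y}"

definition theta :: "('a \<Rightarrow> 'a \<Rightarrow> bool) \<Rightarrow> 'a \<times> 'a \<Rightarrow> 'a \<times> 'a \<Rightarrow> bool" where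
  "theta adj e f = (case e of (x,y) \<Rightarrow> case f of (z,w) \<Rightarrow>
      gdist adj x z + gdist adj y w \<noteq> gdist adj x w + gdist adj y z)"

definition theta_classes :: "('a \<Rightarrow> 'a \<Rightarrow> bool) \<Rightarrow> ('a \<times> 'a) set set" where
  "theta_classes adj = dedges adj // {(e,f). e \<in> dedges adj \<and> f \<in> dedges adj \<and> theta adj e f}"

definition is_4cycle :: "('a \<Rightarrow> 'a \<Rightarrow> bool) \<Rightarrow> 'a \<Rightarrow> 'a \<Rightarrow> 'a \<Rightarrow> 'a \<Rightarrow> bool" where
  "is_4cycle adj x1 x2 x3 x4 = (distinct [x1,x2,x3,x4] \<and>
      adj x1 x2 \<and> adj x2 x3 \<and> adj x3 x4 \<and> adj x4 x1)"

definition crosses :: "('a \<Rightarrow> 'a \<Rightarrow> bool) \<Rightarrow> ('a \<times> 'a) set \<Rightarrow> ('a \<times> 'a) set \<Rightarrow> bool" where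
  "crosses adj C D = (\<exists>x1 x2 x3 x4. is_4cycle adj x1 x2 x3 x4 \<and>
      (x1,x2) \<in> C \<and> (x3,x4) \<in> C \<and> (x2,x3) \<in> D \<and> (x4,x1) \<in> D)"

definition common_4cycle :: "('a \<Rightarrow> 'a \<Rightarrow> bool) \<Rightarrow> 'a \<times> 'a \<Rightarrow> 'a \<times> 'a \<Rightarrow> bool" where
  "common_4cycle adj e f = (\<exists>x1 x2 x3 x4. is_4cycle adj x1 x2 x3 x4 \<and>
      {fst e, snd e} \<in> {{x1,x2},{x2,x3},{x3,x4},{x4,x1}} \<and>
      {fst f, snd f} \<in> {{x1,x2},{x2,x3},{x3,x4},{x4,x1}})"

definition contact_adj :: "('a \<Rightarrow> 'a \<Rightarrow> bool) \<Rightarrow> 'a \<Rightarrow> ('a \<times> 'a) set \<Rightarrow> ('a \<times> 'a) set \<Rightarrow> bool" where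
  "contact_adj adj a C D = (C \<noteq> D \<and> (crosses adj C D \<or>
     (\<exists>s x y. (s,x) \<in> C \<and> (s,y) \<in> D \<and>
        gdist adj s a < gdist adj x a \<and> gdist adj s a < gdist adj y a \<and>
        \<not> common_4cycle adj (s,x) (s,y))))"

end

theory Submission
  imports Defs
begin


definition ind :: "nat option \<Rightarrow> nat option \<Rightarrow> int" where
  "ind p q = (if p = q then 0 else if p = None \<or> q = None then 1 else 2)"

definition Di :: "vtx \<Rightarrow> vtx \<Rightarrow> int" where
  "Di v w = (case v of ((a,b,c),p) \<Rightarrow> case w of ((a',b',c'),q) \<Rightarrow>
     \<bar>a-a'\<bar> + \<bar>b-b'\<bar> + \<bar>c-c'\<bar> + ind p q)"

definition inb :: "pt \<Rightarrow> box \<Rightarrow> bool" where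
  "inb u bx = (case u of (x,y,z) \<Rightarrow> case bx of ((a1,b1,c1),(a2,b2,c2)) \<Rightarrow>
      a1 \<le> x \<and> x \<le> a2 \<and> b1 \<le> y \<and> y \<le> b2 \<and> c1 \<le> z \<and> z \<le> c2)"

lemma Di_simp: "Di ((a,b,c),p) ((a',b',c'),q) = \<bar>a-a'\<bar> + \<bar>b-b'\<bar> + \<bar>c-c'\<bar> + ind p q"
  by (simp add: Di_def)

lemma grid_V_iff: "(a,b,c) \<in> grid_V k1 k2 k3 \<longleftrightarrow> 0 \<le> a \<and> a \<le> k1 \<and> 0 \<le> b \<and> b \<le> k2 \<and> 0 \<le> c \<and> c \<le> k3"
  by (simp add: grid_V_def)

lemma box_pts_iff: "u \<in> box_pts k1 k2 k3 bx \<longleftrightarrow> u \<in> grid_V k1 k2 k3 \<and> inb u bx"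
  by (cases u; cases bx; auto simp: box_pts_def box_set_def pt_real_def inb_def)

lemma tV_None: "(u, None) \<in> tV k1 k2 k3 B \<longleftrightarrow> u \<in> grid_V k1 k2 k3"
  by (cases u) (auto simp: tV_def)

lemma tV_Some: "(u, Some i) \<in> tV k1 k2 k3 B \<longleftrightarrow> i < length B \<and> u \<in> grid_V k1 k2 k3 \<and> inb u (B!i)"
  by (cases u) (auto simp: tV_def box_pts_iff)

lemma grid_adj_iff: "grid_adj (a,b,c) (a',b',c') \<longleftrightarrow>
   (\<bar>a - a'\<bar> = 1 \<and> b = b' \<and> c = c') \<or> (a = a' \<and> \<bar>b - b'\<bar> = 1 \<and> c = c') \<or> (a = a' \<and> b = b' \<and> \<bar>c - c'\<bar> = 1)"
  by (simp add: grid_adj_def)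

lemma tadj_iff: "tadj k1 k2 k3 B (u,p) (u',q) \<longleftrightarrow> (u,p) \<in> tV k1 k2 k3 B \<and> (u',q) \<in> tV k1 k2 k3 B \<and>
   ((p = q \<and> grid_adj u u') \<or> (u = u' \<and> p \<noteq> q \<and> (p = None \<or> q = None)))"
  apply (cases u; cases u'; cases p; cases q)
  by (auto simp: tadj_def grid_adj_def)

lemma tadj_tV: "tadj k1 k2 k3 B v w \<Longrightarrow> v \<in> tV k1 k2 k3 B \<and> w \<in> tV k1 k2 k3 B"
  by (simp add: tadj_def)

lemma tadj_Di: "tadj k1 k2 k3 B v w \<Longrightarrow> Di v w = 1"
  apply (cases v; cases w)
  apply (auto simp: tadj_iff grid_adj_def Di_def ind_def)
  done

lemma ind_tri: "ind p r \<le> ind p q + ind q r"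
  by (auto simp: ind_def)

lemma abs_tri: "\<bar>(a::int) - c\<bar> \<le> \<bar>a - b\<bar> + \<bar>b - c\<bar>"
  by arith

lemma Di_tri: "Di x z \<le> Di x y + Di y z"
proof -
  obtain a b c p where xx: "x = ((a,b,c),p)" by (cases x) auto
  obtain a' b' c' q where yy: "y = ((a',b',c'),q)" by (cases y) auto
  obtain a'' b'' c'' r where zz: "z = ((a'',b'',c''),r)" by (cases z) auto
  show ?thesis unfolding xx yy zz Di_simp
    using abs_tri[of a a'' a'] abs_tri[of b b'' b'] abs_tri[of c c'' c'] ind_tri[of p r q] by linarith
qed

lemma Di_self: "Di x x = 0"
  by (cases x, auto simp: Di_def ind_def)

lemma Di_nonneg: "Di x y \<ge> 0"
  by (cases x; cases y; auto simp: Di_def ind_def)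

lemma path_lb:
  assumes "length p = Suc n" "hd p = x" "\<forall>i<n. tadj k1 k2 k3 B (p!i) (p!Suc i)"
  shows "Di x (last p) \<le> int n"
proof -
  have p0: "p ! 0 = x" using assms(1,2) by (cases p) auto
  have "\<forall>i\<le>n. Di x (p!i) \<le> int i"
  proof (intro allI impI)
    fix i assume "i \<le> n" then show "Di x (p!i) \<le> int i"
    proof (induction i)
      case 0 then show ?case using p0 Di_self by simp
    next
      case (Suc i)
      have "Di x (p!Suc i) \<le> Di x (p!i) + Di (p!i) (p!Suc i)" by (rule Di_tri)
      also have "Di (p!i) (p!Suc i) = 1"
      proof -
        have "tadj k1 k2 k3 B (p!i) (p!Suc i)" using assms(3) Suc.prems by auto
        then show ?thesis by (rule tadj_Di)
      qed
      finally show ?case using Suc by simp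
    qed
  qed
  moreover have "last p = p ! n"
  proof -
    have "p \<noteq> []" using assms(1) by auto
    then show ?thesis using assms(1) by (simp add: last_conv_nth)
  qed
  ultimately show ?thesis by simp
qed

lemma int_step:
  fixes a b c a' b' c' :: int
  assumes "(a,b,c) \<noteq> (a',b',c')"
  shows "\<exists>a'' b'' c''. grid_adj (a,b,c) (a'',b'',c'') \<and>
     min a a' \<le> a'' \<and> a'' \<le> max a a' \<and> min b b' \<le> b'' \<and> b'' \<le> max b b' \<and>
     min c c' \<le> c'' \<and> c'' \<le> max c c' \<and>
     \<bar>a''-a'\<bar> + \<bar>b''-b'\<bar> + \<bar>c''-c'\<bar> = \<bar>a-a'\<bar> + \<bar>b-b'\<bar> + \<bar>c-c'\<bar> - 1"
proof -
  consider "a < a'" | "a > a'" | "a = a'" "b < b'" | "a = a'" "b > b'" | "a = a'" "b = b'" "c < c'"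
    | "a = a'" "b = b'" "c > c'" using assms by fastforce
  then show ?thesis
  proof cases
    case 1 then show ?thesis by (intro exI[of _ "a+1"] exI[of _ b] exI[of _ c]) (auto simp: grid_adj_iff)
  next
    case 2 then show ?thesis by (intro exI[of _ "a-1"] exI[of _ b] exI[of _ c]) (auto simp: grid_adj_iff)
  next
    case 3 then show ?thesis by (intro exI[of _ "a"] exI[of _ "b+1"] exI[of _ c]) (auto simp: grid_adj_iff)
  next
    case 4 then show ?thesis by (intro exI[of _ "a"] exI[of _ "b-1"] exI[of _ c]) (auto simp: grid_adj_iff)
  next
    case 5 then show ?thesis by (intro exI[of _ "a"] exI[of _ "b"] exI[of _ "c+1"]) (auto simp: grid_adj_iff)
  next
    case 6 then show ?thesis by (intro exI[of _ "a"] exI[of _ "b"] exI[of _ "c-1"]) (auto simp: grid_adj_iff)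
  qed
qed

lemma betw: "(lo::int) \<le> x \<Longrightarrow> x \<le> hi \<Longrightarrow> lo \<le> y \<Longrightarrow> y \<le> hi \<Longrightarrow> min x y \<le> z \<Longrightarrow> z \<le> max x y \<Longrightarrow> lo \<le> z \<and> z \<le> hi"
  by linarith

lemma step:
  assumes v: "v \<in> tV k1 k2 k3 B" and w: "w \<in> tV k1 k2 k3 B" and ne: "v \<noteq> w"
  shows "\<exists>v'. tadj k1 k2 k3 B v v' \<and> Di v' w = Di v w - 1"
proof -
  obtain a b c p where vv: "v = ((a,b,c),p)" by (cases v) auto
  obtain a' b' c' q where ww: "w = ((a',b',c'),q)" by (cases w) auto
  show ?thesis
  proof (cases "p \<noteq> None \<and> p \<noteq> q")
    case True
    then obtain i where pi: "p = Some i" by auto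
    have "((a,b,c),None) \<in> tV k1 k2 k3 B" using v vv pi by (simp add: tV_Some tV_None)
    then show ?thesis using True v vv ww pi
      by (intro exI[of _ "((a,b,c),None)"]) (auto simp: tadj_iff Di_simp ind_def)
  next
    case False
    show ?thesis
    proof (cases "(a,b,c) = (a',b',c')")
      case True
      then have "p = None" "q \<noteq> None" using False ne vv ww by auto
      then show ?thesis using True v w vv ww
        by (intro exI[of _ w]) (auto simp: tadj_iff Di_simp ind_def)
    next
      case neq: False
      obtain a'' b'' c'' where st: "grid_adj (a,b,c) (a'',b'',c'')"
        "min a a' \<le> a''" "a'' \<le> max a a'" "min b b' \<le> b''" "b'' \<le> max b b'"
        "min c c' \<le> c''" "c'' \<le> max c c'"
        "\<bar>a''-a'\<bar> + \<bar>b''-b'\<bar> + \<bar>c''-c'\<bar> = \<bar>a-a'\<bar> + \<bar>b-b'\<bar> + \<bar>c-c'\<bar> - 1"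
        using int_step[OF neq] by blast
      have gv: "(a,b,c) \<in> grid_V k1 k2 k3" using v vv by (cases p) (simp_all add: tV_None tV_Some)
      have gw: "(a',b',c') \<in> grid_V k1 k2 k3" using w ww by (cases q) (simp_all add: tV_None tV_Some)
      have g'': "(a'',b'',c'') \<in> grid_V k1 k2 k3"
        using gv gw betw[of 0 a k1 a' a''] betw[of 0 b k2 b' b''] betw[of 0 c k3 c' c''] st(2-7)
        unfolding grid_V_iff by blast
      have mem: "((a'',b'',c''),p) \<in> tV k1 k2 k3 B"
      proof (cases p)
        case None
        then show ?thesis using g'' by (simp add: tV_None)
      next
        case (Some i)
        then have "q = p" using False by auto
        obtain a1 b1 c1 a2 b2 c2 where bx: "B!i = ((a1,b1,c1),(a2,b2,c2))" by (metis prod.exhaust)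
        have i1: "inb (a,b,c) (B!i)" "i < length B" using v vv Some by (simp_all add: tV_Some)
        have i2: "inb (a',b',c') (B!i)" using w ww Some \<open>q = p\<close> by (simp add: tV_Some)
        have "inb (a'',b'',c'') (B!i)" using i1 i2 st(2-7)
           betw[of a1 a a2 a' a''] betw[of b1 b b2 b' b''] betw[of c1 c c2 c' c'']
          unfolding bx inb_def by (simp only: prod.case)
        then show ?thesis using Some g'' i1 by (simp add: tV_Some)
      qed
      show ?thesis using mem v st(1,8) vv ww
        by (intro exI[of _ "((a'',b'',c''),p)"]) (auto simp: tadj_iff Di_simp)
    qed
  qed
qed

lemma path_ex:
  assumes w: "w \<in> tV k1 k2 k3 B"
  shows "v \<in> tV k1 k2 k3 B \<Longrightarrow> Di v w = int n \<Longrightarrow>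
    \<exists>p. length p = Suc n \<and> hd p = v \<and> last p = w \<and> (\<forall>i<n. tadj k1 k2 k3 B (p!i) (p!Suc i))"
proof (induction n arbitrary: v)
  case 0
  then have "v = w"
    by (cases v; cases w) (auto simp: Di_simp ind_def split: if_splits)
  then show ?case by (intro exI[of _ "[v]"]) auto
next
  case (Suc n)
  have "v \<noteq> w"
  proof
    assume "v = w" then have "Di v w = 0" by (simp add: Di_self)
    with Suc.prems(2) show False by simp
  qed
  then obtain v' where v': "tadj k1 k2 k3 B v v'" "Di v' w = Di v w - 1" using step Suc.prems w by blast
  then obtain p where p: "length p = Suc n" "hd p = v'" "last p = w" "\<forall>i<n. tadj k1 k2 k3 B (p!i) (p!Suc i)"
  proof -
    have "v' \<in> tV k1 k2 k3 B" using v'(1) tadj_tV by blast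
    moreover have "Di v' w = int n" using v'(2) Suc.prems(2) by simp
    ultimately show ?thesis using Suc.IH that by blast
  qed
  show ?case
  proof (intro exI[of _ "v # p"] conjI allI impI)
    show "last (v # p) = w" using p by auto
    fix i assume "i < Suc n"
    then show "tadj k1 k2 k3 B ((v # p) ! i) ((v # p) ! Suc i)"
    proof -
      have pne: "p \<noteq> []" using p(1) by auto
      then have "hd p = p ! 0" by (simp add: hd_conv_nth)
      then show ?thesis using p v' \<open>i < Suc n\<close> by (cases i) auto
    qed
  qed (use p in auto)
qed

lemma gdist_Di:
  assumes "v \<in> tV k1 k2 k3 B" "w \<in> tV k1 k2 k3 B"
  shows "gdist (tadj k1 k2 k3 B) v w = nat (Di v w)"
  unfolding gdist_def
proof (rule Least_equality)
  show "\<exists>p. length p = Suc (nat (Di v w)) \<and> hd p = v \<and> last p = w \<and>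
      (\<forall>i<nat (Di v w). tadj k1 k2 k3 B (p ! i) (p ! Suc i))"
    using path_ex[OF assms(2) assms(1)] Di_nonneg by simp
next
  fix n assume "\<exists>p. length p = Suc n \<and> hd p = v \<and> last p = w \<and> (\<forall>i<n. tadj k1 k2 k3 B (p ! i) (p ! Suc i))"
  then show "nat (Di v w) \<le> n" using path_lb by fastforce
qed



definition cp :: "nat \<Rightarrow> vtx \<Rightarrow> int" where
  "cp d v = (if d = 0 then fst (fst v) else if d = 1 then fst (snd (fst v)) else snd (snd (fst v)))"

abbreviation ly :: "vtx \<Rightarrow> nat option" where "ly v \<equiv> snd v"

lemma cp_simps[simp]: "cp 0 ((a,b,c),p) = a" "cp (Suc 0) ((a,b,c),p) = b" "cp 2 ((a,b,c),p) = c"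
  by (auto simp: cp_def)

lemma vtx_ext: "x = y \<longleftrightarrow> cp 0 x = cp 0 y \<and> cp 1 x = cp 1 y \<and> cp 2 x = cp 2 y \<and> ly x = ly y"
  by (cases x; cases y) (auto simp: cp_def)

lemma Di_cp: "Di x y = \<bar>cp 0 x - cp 0 y\<bar> + \<bar>cp 1 x - cp 1 y\<bar> + \<bar>cp 2 x - cp 2 y\<bar> + ind (ly x) (ly y)"
  by (cases x; cases y) (auto simp: cp_def Di_def)

definition lab :: "vtx \<times> vtx \<Rightarrow> (nat \<times> int) + nat" where
  "lab e = (let x = fst e; y = snd e in
    if ly x \<noteq> ly y then Inr (case ly x of None \<Rightarrow> the (ly y) | Some i \<Rightarrow> i)
    else if cp 0 x \<noteq> cp 0 y then Inl (0, min (cp 0 x) (cp 0 y))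
    else if cp 1 x \<noteq> cp 1 y then Inl (1, min (cp 1 x) (cp 1 y))
    else Inl (2, min (cp 2 x) (cp 2 y)))"

definition cross :: "int \<Rightarrow> int \<Rightarrow> int \<Rightarrow> int \<Rightarrow> int" where
  "cross a b c d = \<bar>a-c\<bar> + \<bar>b-d\<bar> - \<bar>a-d\<bar> - \<bar>b-c\<bar>"

definition icross :: "nat option \<Rightarrow> nat option \<Rightarrow> nat option \<Rightarrow> nat option \<Rightarrow> int" where
  "icross p q r s = ind p r + ind q s - ind p s - ind q r"

lemma cross0[simp]: "cross a a c d = 0" "cross a b c c = 0"
  by (auto simp: cross_def)

lemma icross0[simp]: "icross p p r s = 0" "icross p q r r = 0"
  by (auto simp: icross_def)

lemma cross_unit: "\<bar>a-b\<bar> = 1 \<Longrightarrow> \<bar>c-d\<bar> = 1 \<Longrightarrow> cross a b c d = 0 \<longleftrightarrow> min a b \<noteq> min c d"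
  unfolding cross_def by (auto simp: abs_if min_def split: if_splits)

lemma icross_box: "icross None (Some i) None (Some j) = 0 \<longleftrightarrow> i \<noteq> j"
  "icross None (Some i) (Some j) None = 0 \<longleftrightarrow> i \<noteq> j"
  "icross (Some i) None None (Some j) = 0 \<longleftrightarrow> i \<noteq> j"
  "icross (Some i) None (Some j) None = 0 \<longleftrightarrow> i \<noteq> j"
  by (auto simp: icross_def ind_def)

lemma Di_sum: "Di x z + Di y w - Di x w - Di y z =
   cross (cp 0 x) (cp 0 y) (cp 0 z) (cp 0 w) + cross (cp 1 x) (cp 1 y) (cp 1 z) (cp 1 w)
   + cross (cp 2 x) (cp 2 y) (cp 2 z) (cp 2 w) + icross (ly x) (ly y) (ly z) (ly w)"
  by (simp add: Di_cp cross_def icross_def)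

lemma edge_shape:
  assumes "tadj k1 k2 k3 B x y"
  shows "(ly x = ly y \<and> \<bar>cp 0 x - cp 0 y\<bar> = 1 \<and> cp 1 x = cp 1 y \<and> cp 2 x = cp 2 y) \<or>
         (ly x = ly y \<and> cp 0 x = cp 0 y \<and> \<bar>cp 1 x - cp 1 y\<bar> = 1 \<and> cp 2 x = cp 2 y) \<or>
         (ly x = ly y \<and> cp 0 x = cp 0 y \<and> cp 1 x = cp 1 y \<and> \<bar>cp 2 x - cp 2 y\<bar> = 1) \<or>
         (cp 0 x = cp 0 y \<and> cp 1 x = cp 1 y \<and> cp 2 x = cp 2 y \<and>
            (\<exists>i. (ly x = None \<and> ly y = Some i) \<or> (ly x = Some i \<and> ly y = None)))"
proof -
  obtain a b c p where xx: "x = ((a,b,c),p)" by (cases x) auto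
  obtain a' b' c' q where yy: "y = ((a',b',c'),q)" by (cases y) auto
  show ?thesis using assms unfolding xx yy tadj_iff grid_adj_iff
    by (cases p; cases q) auto
qed

lemma theta_lab_int:
  assumes e: "tadj k1 k2 k3 B x y" and f: "tadj k1 k2 k3 B z w"
  shows "(Di x z + Di y w - Di x w - Di y z \<noteq> 0) \<longleftrightarrow> lab (x,y) = lab (z,w)"
  unfolding Di_sum
  using edge_shape[OF e] edge_shape[OF f]
  apply (elim disjE conjE exE)
  apply (simp_all add: lab_def cross_unit icross_box)
  apply (auto)
  done

lemma theta_iff:
  assumes e: "tadj k1 k2 k3 B x y" and f: "tadj k1 k2 k3 B z w"
  shows "theta (tadj k1 k2 k3 B) (x,y) (z,w) \<longleftrightarrow> lab (x,y) = lab (z,w)"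
proof -
  have t: "x \<in> tV k1 k2 k3 B" "y \<in> tV k1 k2 k3 B" "z \<in> tV k1 k2 k3 B" "w \<in> tV k1 k2 k3 B"
    using e f tadj_tV by auto
  have "theta (tadj k1 k2 k3 B) (x,y) (z,w) \<longleftrightarrow>
     nat (Di x z) + nat (Di y w) \<noteq> nat (Di x w) + nat (Di y z)"
    unfolding theta_def using t by (simp add: gdist_Di)
  also have "\<dots> \<longleftrightarrow> Di x z + Di y w - Di x w - Di y z \<noteq> 0"
    using Di_nonneg[of x z] Di_nonneg[of y w] Di_nonneg[of x w] Di_nonneg[of y z] by linarith
  finally show ?thesis using theta_lab_int[OF e f] by simp
qed

lemma class_char:
  assumes "C \<in> theta_classes (tadj k1 k2 k3 B)"
  shows "\<exists>e0 \<in> dedges (tadj k1 k2 k3 B). C = {f \<in> dedges (tadj k1 k2 k3 B). lab f = lab e0}"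
proof -
  from assms obtain e0 where e0: "e0 \<in> dedges (tadj k1 k2 k3 B)"
    and C: "C = {(e,f). e \<in> dedges (tadj k1 k2 k3 B) \<and> f \<in> dedges (tadj k1 k2 k3 B) \<and> theta (tadj k1 k2 k3 B) e f} `` {e0}"
    unfolding theta_classes_def quotient_def by blast
  have "C = {f \<in> dedges (tadj k1 k2 k3 B). lab f = lab e0}"
    unfolding C using e0 theta_iff by (auto simp: dedges_def)
  then show ?thesis using e0 by blast
qed

definition LC :: "(vtx \<times> vtx) set \<Rightarrow> (nat \<times> int) + nat" where
  "LC C = lab (SOME e. e \<in> C)"

lemma class_LC:
  assumes "C \<in> theta_classes (tadj k1 k2 k3 B)"
  shows "C = {f \<in> dedges (tadj k1 k2 k3 B). lab f = LC C}" "\<exists>e. e \<in> C"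
proof -
  obtain e0 where e0: "e0 \<in> dedges (tadj k1 k2 k3 B)" and C: "C = {f \<in> dedges (tadj k1 k2 k3 B). lab f = lab e0}"
    using class_char[OF assms] by blast
  have "e0 \<in> C" using e0 C by auto
  then have "(SOME e. e \<in> C) \<in> C" by (rule someI)
  then have "LC C = lab e0" unfolding LC_def using C by auto
  then show "C = {f \<in> dedges (tadj k1 k2 k3 B). lab f = LC C}" using C by simp
  show "\<exists>e. e \<in> C" using \<open>e0 \<in> C\<close> by blast
qed

lemma E1:
  assumes "tadj k1 k2 k3 B x y" "lab (x,y) = Inr i"
  shows "(fst x, Some i) \<in> tV k1 k2 k3 B \<and> fst y = fst x \<and>
     ((ly x = None \<and> ly y = Some i) \<or> (ly x = Some i \<and> ly y = None))"
proof -
  obtain u p where xx: "x = (u,p)" by (cases x) auto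
  obtain u' q where yy: "y = (u',q)" by (cases y) auto
  have tv: "(u,p) \<in> tV k1 k2 k3 B" "(u',q) \<in> tV k1 k2 k3 B" using assms(1) tadj_tV xx yy by auto
  have "u = u' \<and> p \<noteq> q \<and> (p = None \<or> q = None)"
    using assms unfolding xx yy tadj_iff by (auto simp: lab_def Let_def split: if_splits)
  then show ?thesis using assms(2) tv unfolding xx yy
    by (cases p; cases q) (auto simp: lab_def)
qed

lemma E2:
  assumes "tadj k1 k2 k3 B x y" "lab (x,y) = Inl (d,t)"
  shows "d < 3 \<and> ly x = ly y \<and> \<bar>cp d x - cp d y\<bar> = 1 \<and> (\<forall>d'. d' < 3 \<longrightarrow> d' \<noteq> d \<longrightarrow> cp d' x = cp d' y)"
proof -
  have d3: "\<And>d'. d' < (3::nat) \<longleftrightarrow> d' = 0 \<or> d' = 1 \<or> d' = 2" by auto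
  show ?thesis
    using edge_shape[OF assms(1)] assms(2) unfolding d3
    by (elim disjE conjE exE) (auto simp: lab_def One_nat_def split: if_splits)
qed

lemma eq_from:
  assumes "d < 3" "ly x = ly y" "\<forall>d'. d' < 3 \<longrightarrow> d' \<noteq> d \<longrightarrow> cp d' x = cp d' y" "cp d x = cp d y"
  shows "x = y"
proof -
  have "d = 0 \<or> d = 1 \<or> d = 2" using assms(1) by auto
  then show ?thesis using assms(2-4) unfolding vtx_ext by auto
qed

lemma cp1[simp]: "cp 1 ((a,b,c),p) = b" by (simp add: cp_def)

abbreviation co :: "(nat \<times> int) + nat \<Rightarrow> nat + nat" where "co \<equiv> map_sum fst id"

lemma tV_nonneg: "v \<in> tV k1 k2 k3 B \<Longrightarrow> d < 3 \<Longrightarrow> 0 \<le> cp d v"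
proof -
  assume v: "v \<in> tV k1 k2 k3 B" and d: "d < 3"
  obtain a b c p where vv: "v = ((a,b,c),p)" by (cases v) auto
  have "(a,b,c) \<in> grid_V k1 k2 k3" using v vv by (cases p) (simp_all add: tV_None tV_Some)
  then have "0 \<le> a" "0 \<le> b" "0 \<le> c" by (simp_all add: grid_V_iff)
  moreover have "d = 0 \<or> d = 1 \<or> d = 2" using d by auto
  ultimately show ?thesis unfolding vv by auto
qed

lemma Di_alpha: "Di v ((0,0,0),None) = \<bar>cp 0 v\<bar> + \<bar>cp 1 v\<bar> + \<bar>cp 2 v\<bar> + ind (ly v) None"
  by (simp add: Di_cp)

lemma incr_one:
  assumes "tadj k1 k2 k3 B s x" "lab (s,x) = Inl (d,t)" "Di s ((0,0,0),None) < Di x ((0,0,0),None)"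
  shows "cp d x = cp d s + 1"
proof -
  have e: "d < 3" "ly s = ly x" "\<bar>cp d s - cp d x\<bar> = 1" "\<forall>d'. d' < 3 \<longrightarrow> d' \<noteq> d \<longrightarrow> cp d' s = cp d' x"
    using E2[OF assms(1,2)] by auto
  have s: "s \<in> tV k1 k2 k3 B" using assms(1) tadj_tV by auto
  have nn: "0 \<le> cp d s" using tV_nonneg[OF s e(1)] .
  have nx: "0 \<le> cp d x" using tV_nonneg[OF _ e(1), of x] assms(1) tadj_tV by blast
  have dd: "d = 0 \<or> d = 1 \<or> d = 2" using e(1) by auto
  have "\<bar>cp d s\<bar> < \<bar>cp d x\<bar>"
    using dd assms(3) e(2,4) unfolding Di_alpha by auto
  then show ?thesis using nn nx e(3) by arith
qed

lemma touch:
  assumes sx: "tadj k1 k2 k3 B s x" and sy: "tadj k1 k2 k3 B s y"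
    and co: "co (lab (s,x)) = co (lab (s,y))"
    and dx: "Di s ((0,0,0),None) < Di x ((0,0,0),None)"
    and dy: "Di s ((0,0,0),None) < Di y ((0,0,0),None)"
  shows "x = y"
proof (cases "lab (s,x)")
  case (Inr i)
  then have Ly: "lab (s,y) = Inr i" using co by (cases "lab (s,y)") auto
  show ?thesis using E1[OF sx Inr] E1[OF sy Ly] by (auto simp: prod_eq_iff)
next
  case (Inl dt)
  then obtain d t where Lx: "lab (s,x) = Inl (d,t)" by (cases dt) auto
  then obtain t' where Ly: "lab (s,y) = Inl (d,t')" using co by (cases "lab (s,y)") auto
  have ex: "d < 3" "ly s = ly x" "\<forall>d'. d' < 3 \<longrightarrow> d' \<noteq> d \<longrightarrow> cp d' s = cp d' x"
    using E2[OF sx Lx] by auto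
  have ey: "ly s = ly y" "\<forall>d'. d' < 3 \<longrightarrow> d' \<noteq> d \<longrightarrow> cp d' s = cp d' y"
    using E2[OF sy Ly] by auto
  have "cp d x = cp d y" using incr_one[OF sx Lx dx] incr_one[OF sy Ly dy] by simp
  then show ?thesis using eq_from[OF ex(1), of x y] ex(2,3) ey by auto
qed

lemma no_4cycle:
  assumes cyc: "is_4cycle (tadj k1 k2 k3 B) x1 x2 x3 x4"
    and c1: "co (lab (x1,x2)) = co (lab (x2,x3))" and c2: "co (lab (x2,x3)) = co (lab (x3,x4))"
    and c3: "co (lab (x3,x4)) = co (lab (x4,x1))"
  shows False
proof -
  have a: "tadj k1 k2 k3 B x1 x2" "tadj k1 k2 k3 B x2 x3" "tadj k1 k2 k3 B x3 x4" "tadj k1 k2 k3 B x4 x1"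
    and dist: "x1 \<noteq> x3" "x2 \<noteq> x4"
    using cyc unfolding is_4cycle_def by auto
  show False
  proof (cases "lab (x1,x2)")
    case (Inr i)
    then have L2: "lab (x2,x3) = Inr i" using c1 by (cases "lab (x2,x3)") auto
    have "x1 = x3" using E1[OF a(1) Inr] E1[OF a(2) L2] by (auto simp: prod_eq_iff)
    then show False using dist by simp
  next
    case (Inl dt)
    then obtain d t1 where L1: "lab (x1,x2) = Inl (d,t1)" by (cases dt) auto
    then obtain t2 where L2: "lab (x2,x3) = Inl (d,t2)" using c1 by (cases "lab (x2,x3)") auto
    then obtain t3 where L3: "lab (x3,x4) = Inl (d,t3)" using c2 by (cases "lab (x3,x4)") auto
    then obtain t4 where L4: "lab (x4,x1) = Inl (d,t4)" using c3 by (cases "lab (x4,x1)") auto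
    note e1 = E2[OF a(1) L1] and e2 = E2[OF a(2) L2] and e3 = E2[OF a(3) L3] and e4 = E2[OF a(4) L4]
    have d3: "d < 3" using e1 by simp
    have n13: "cp d x1 \<noteq> cp d x3"
    proof
      assume "cp d x1 = cp d x3"
      then have "x1 = x3" using eq_from[OF d3, of x1 x3] e1 e2 by auto
      then show False using dist by simp
    qed
    have n24: "cp d x2 \<noteq> cp d x4"
    proof
      assume "cp d x2 = cp d x4"
      then have "x2 = x4" using eq_from[OF d3, of x2 x4] e2 e3 by auto
      then show False using dist by simp
    qed
    show False using n13 n24 e1 e2 e3 e4 by arith
  qed
qed

lemma tV_Some_box: "(u, Some i) \<in> tV k1 k2 k3 B \<Longrightarrow> i < length B \<and> pt_real u \<in> box_set (B!i)"
  by (auto simp: tV_def box_pts_def)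

lemma omega_ge:
  assumes "I \<subseteq> {..<length B}" "\<forall>i\<in>I. \<forall>j\<in>I. i \<noteq> j \<longrightarrow> box_set (B!i) \<inter> box_set (B!j) \<noteq> {}"
  shows "card I \<le> omega B"
proof -
  let ?S = "{card I |I. I \<subseteq> {..<length B} \<and>
      (\<forall>i\<in>I. \<forall>j\<in>I. i \<noteq> j \<longrightarrow> box_set (B!i) \<inter> box_set (B!j) \<noteq> {})}"
  have "?S \<subseteq> card ` Pow {..<length B}" by auto
  then have "finite ?S" by (rule finite_subset) simp
  moreover have "card I \<in> ?S" using assms by blast
  ultimately show ?thesis unfolding omega_def by (rule Max_ge)
qed

lemma gdist_lt:
  assumes "s \<in> tV k1 k2 k3 B" "x \<in> tV k1 k2 k3 B" "a \<in> tV k1 k2 k3 B"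
    "gdist (tadj k1 k2 k3 B) s a < gdist (tadj k1 k2 k3 B) x a"
  shows "Di s a < Di x a"
  using assms gdist_Di[of s k1 k2 k3 B a] gdist_Di[of x k1 k2 k3 B a] by simp

lemma contact_diff:
  assumes C: "C \<in> theta_classes (tadj k1 k2 k3 B)" and D: "D \<in> theta_classes (tadj k1 k2 k3 B)"
    and ne: "C \<noteq> D" and ca: "contact_adj (tadj k1 k2 k3 B) ((0,0,0),None) C D"
    and al: "((0,0,0),None) \<in> tV k1 k2 k3 B"
  shows "co (LC C) \<noteq> co (LC D)"
proof
  assume eq: "co (LC C) = co (LC D)"
  have Ceq: "C = {f \<in> dedges (tadj k1 k2 k3 B). lab f = LC C}" using class_LC[OF C] by blast
  have Deq: "D = {f \<in> dedges (tadj k1 k2 k3 B). lab f = LC D}" using class_LC[OF D] by blast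
  have memC: "\<And>x y. (x,y) \<in> C \<Longrightarrow> tadj k1 k2 k3 B x y \<and> lab (x,y) = LC C"
    using Ceq by (auto simp: dedges_def)
  have memD: "\<And>x y. (x,y) \<in> D \<Longrightarrow> tadj k1 k2 k3 B x y \<and> lab (x,y) = LC D"
    using Deq by (auto simp: dedges_def)
  from ca consider (cr) "crosses (tadj k1 k2 k3 B) C D"
    | (to) s x y where "(s,x) \<in> C" "(s,y) \<in> D"
        "gdist (tadj k1 k2 k3 B) s ((0,0,0),None) < gdist (tadj k1 k2 k3 B) x ((0,0,0),None)"
        "gdist (tadj k1 k2 k3 B) s ((0,0,0),None) < gdist (tadj k1 k2 k3 B) y ((0,0,0),None)"
    unfolding contact_adj_def by blast
  then show False
  proof cases
    case cr
    then obtain x1 x2 x3 x4 where cyc: "is_4cycle (tadj k1 k2 k3 B) x1 x2 x3 x4"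
      "(x1,x2) \<in> C" "(x3,x4) \<in> C" "(x2,x3) \<in> D" "(x4,x1) \<in> D"
      unfolding crosses_def by blast
    show False
      using no_4cycle[OF cyc(1)] memC[OF cyc(2)] memC[OF cyc(3)] memD[OF cyc(4)] memD[OF cyc(5)] eq
      by simp
  next
    case to
    have sx: "tadj k1 k2 k3 B s x" "lab (s,x) = LC C" using memC[OF to(1)] by auto
    have sy: "tadj k1 k2 k3 B s y" "lab (s,y) = LC D" using memD[OF to(2)] by auto
    have ts: "s \<in> tV k1 k2 k3 B" "x \<in> tV k1 k2 k3 B" "y \<in> tV k1 k2 k3 B"
      using sx sy tadj_tV by auto
    have "x = y"
      using touch[OF sx(1) sy(1)] sx(2) sy(2) eq gdist_lt[OF ts(1) ts(2) al to(3)]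
        gdist_lt[OF ts(1) ts(3) al to(4)] by simp
    then have "LC C = LC D" using sx sy by simp
    then show False using Ceq Deq ne by simp
  qed
qed

lemma contact_box:
  assumes C: "C \<in> theta_classes (tadj k1 k2 k3 B)" and D: "D \<in> theta_classes (tadj k1 k2 k3 B)"
    and ca: "contact_adj (tadj k1 k2 k3 B) ((0,0,0),None) C D"
    and i: "LC C = Inr i" and j: "LC D = Inr j"
  shows "\<exists>u. (u, Some i) \<in> tV k1 k2 k3 B \<and> (u, Some j) \<in> tV k1 k2 k3 B"
proof -
  have Ceq: "C = {f \<in> dedges (tadj k1 k2 k3 B). lab f = LC C}" using class_LC[OF C] by blast
  have Deq: "D = {f \<in> dedges (tadj k1 k2 k3 B). lab f = LC D}" using class_LC[OF D] by blast
  have memC: "\<And>x y. (x,y) \<in> C \<Longrightarrow> (fst x, Some i) \<in> tV k1 k2 k3 B \<and> (fst y, Some i) \<in> tV k1 k2 k3 B"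
  proof -
    fix x y assume "(x,y) \<in> C"
    then have "tadj k1 k2 k3 B x y" "lab (x,y) = Inr i" using Ceq i by (auto simp: dedges_def)
    from E1[OF this] show "(fst x, Some i) \<in> tV k1 k2 k3 B \<and> (fst y, Some i) \<in> tV k1 k2 k3 B" by simp
  qed
  have memD: "\<And>x y. (x,y) \<in> D \<Longrightarrow> (fst x, Some j) \<in> tV k1 k2 k3 B \<and> (fst y, Some j) \<in> tV k1 k2 k3 B"
  proof -
    fix x y assume "(x,y) \<in> D"
    then have "tadj k1 k2 k3 B x y" "lab (x,y) = Inr j" using Deq j by (auto simp: dedges_def)
    from E1[OF this] show "(fst x, Some j) \<in> tV k1 k2 k3 B \<and> (fst y, Some j) \<in> tV k1 k2 k3 B" by simp
  qed
  from ca consider (cr) "crosses (tadj k1 k2 k3 B) C D"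
    | (to) s x y where "(s,x) \<in> C" "(s,y) \<in> D"
    unfolding contact_adj_def by blast
  then show ?thesis
  proof cases
    case cr
    then obtain x1 x2 x3 x4 where cyc: "(x1,x2) \<in> C" "(x2,x3) \<in> D"
      unfolding crosses_def by blast
    show ?thesis using memC[OF cyc(1)] memD[OF cyc(2)] by blast
  next
    case to
    show ?thesis using memC[OF to(1)] memD[OF to(2)] by blast
  qed
qed

lemma class_lab_range:
  assumes C: "C \<in> theta_classes (tadj k1 k2 k3 B)"
  shows "(\<forall>i. LC C = Inr i \<longrightarrow> i < length B) \<and> (\<forall>d t. LC C = Inl (d,t) \<longrightarrow> d < 3)"
proof -
  have Ceq: "C = {f \<in> dedges (tadj k1 k2 k3 B). lab f = LC C}" and ne: "\<exists>e. e \<in> C"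
    using class_LC[OF C] by blast+
  then obtain x y where xy: "(x,y) \<in> C" by auto
  then have a: "tadj k1 k2 k3 B x y" "lab (x,y) = LC C" using Ceq by (auto simp: dedges_def)
  show ?thesis
  proof (intro conjI allI impI)
    fix i assume "LC C = Inr i"
    then have "(fst x, Some i) \<in> tV k1 k2 k3 B" using E1[of k1 k2 k3 B x y i] a by auto
    then show "i < length B" using tV_Some_box by blast
  next
    fix d t assume "LC C = Inl (d,t)"
    then show "d < 3" using E2[of k1 k2 k3 B x y d t] a by auto
  qed
qed

lemma part3:
  assumes al: "((0,0,0),None) \<in> tV k1 k2 k3 B" and K: "K \<subseteq> theta_classes (tadj k1 k2 k3 B)"
    and pw: "\<forall>C\<in>K. \<forall>D\<in>K. C \<noteq> D \<longrightarrow> contact_adj (tadj k1 k2 k3 B) ((0,0,0), None) C D"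
  shows "card K \<le> omega B + 3"
proof -
  define f where "f = (\<lambda>C. co (LC C))"
  have inj: "inj_on f K"
  proof (rule inj_onI)
    fix C D assume "C \<in> K" "D \<in> K" "f C = f D"
    then show "C = D" using contact_diff[of C k1 k2 k3 B D] K pw al unfolding f_def by blast
  qed
  define I where "I = {i. Inr i \<in> f ` K}"
  have inv: "\<And>C i. C \<in> K \<Longrightarrow> f C = Inr i \<Longrightarrow> LC C = Inr i"
    unfolding f_def by (case_tac "LC C") auto
  have sub: "f ` K \<subseteq> Inl ` {0,1,2} \<union> Inr ` I"
  proof
    fix z assume "z \<in> f ` K"
    then obtain C where C: "C \<in> K" "z = f C" by auto
    show "z \<in> Inl ` {0,1,2} \<union> Inr ` I"
    proof (cases "LC C")
      case (Inl dt)
      then obtain d t where L: "LC C = Inl (d,t)" by (cases dt) auto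
      then have "d < 3" using class_lab_range[of C k1 k2 k3 B] C K by blast
      then have "d \<in> {0,1,2}" by auto
      then show ?thesis using C L unfolding f_def by auto
    next
      case (Inr i)
      then have "i \<in> I" using C unfolding I_def f_def by force
      then show ?thesis using C Inr unfolding f_def by auto
    qed
  qed
  have Ile: "I \<subseteq> {..<length B}"
  proof
    fix i assume "i \<in> I"
    then obtain C where "C \<in> K" "f C = Inr i" unfolding I_def by auto
    then show "i \<in> {..<length B}" using inv class_lab_range[of C k1 k2 k3 B] K by blast
  qed
  have pwI: "\<forall>i\<in>I. \<forall>j\<in>I. i \<noteq> j \<longrightarrow> box_set (B!i) \<inter> box_set (B!j) \<noteq> {}"
  proof (intro ballI impI)
    fix i j assume "i \<in> I" "j \<in> I" "i \<noteq> j"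
    then obtain C D where CD: "C \<in> K" "f C = Inr i" "D \<in> K" "f D = Inr j" unfolding I_def by auto
    then have "C \<noteq> D" using \<open>i \<noteq> j\<close> by auto
    then have ca: "contact_adj (tadj k1 k2 k3 B) ((0,0,0), None) C D" using pw CD by blast
    obtain u where "(u, Some i) \<in> tV k1 k2 k3 B" "(u, Some j) \<in> tV k1 k2 k3 B"
      using contact_box[OF _ _ ca inv[OF CD(1,2)] inv[OF CD(3,4)]] CD K by blast
    then have "pt_real u \<in> box_set (B!i) \<inter> box_set (B!j)" using tV_Some_box by blast
    then show "box_set (B!i) \<inter> box_set (B!j) \<noteq> {}" by blast
  qed
  have finI: "finite I" using Ile finite_subset by blast
  have "card K \<le> card (Inl ` {0,1,2} \<union> Inr ` I :: (nat + nat) set)"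
    using card_inj_on_le[OF inj sub] finI by simp
  also have "\<dots> \<le> card (Inl ` {0,1,2::nat} :: (nat + nat) set) + card (Inr ` I :: (nat + nat) set)"
    by (rule card_Un_le)
  also have "\<dots> \<le> 3 + card I"
  proof -
    have "card (Inl ` {0,1,2::nat} :: (nat + nat) set) \<le> card {0,1,2::nat}" by (rule card_image_le) simp
    moreover have "card (Inr ` I :: (nat + nat) set) \<le> card I" using finI by (rule card_image_le)
    ultimately show ?thesis by simp
  qed
  also have "\<dots> \<le> 3 + omega B" using omega_ge[OF Ile pwI] by simp
  finally show ?thesis by simp
qed

lemma Di_alpha_tV: "((a,b,c),p) \<in> tV k1 k2 k3 B \<Longrightarrow> Di ((a,b,c),p) ((0,0,0),None) = a+b+c+ind p None"
proof -
  assume v: "((a,b,c),p) \<in> tV k1 k2 k3 B"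
  have "(a,b,c) \<in> grid_V k1 k2 k3" using v by (cases p) (simp_all add: tV_None tV_Some)
  then show ?thesis by (simp add: grid_V_iff Di_simp)
qed

lemma nbrs:
  assumes "tadj k1 k2 k3 B ((a,b,c),p) y"
  shows "y \<in> set [((a+1,b,c),p), ((a-1,b,c),p), ((a,b+1,c),p), ((a,b-1,c),p), ((a,b,c+1),p), ((a,b,c-1),p)]
     \<or> (fst y = (a,b,c) \<and> snd y \<noteq> p \<and> (p = None \<or> snd y = None))"
proof -
  obtain a' b' c' q where yy: "y = ((a',b',c'),q)" by (cases y) auto
  have abs1: "\<And>x x'::int. \<bar>x - x'\<bar> = 1 \<Longrightarrow> x' = x + 1 \<or> x' = x - 1" by arith
  have "(q = p \<and> grid_adj (a,b,c) (a',b',c')) \<or> ((a,b,c) = (a',b',c') \<and> q \<noteq> p \<and> (p = None \<or> q = None))"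
    using assms unfolding yy tadj_iff by (cases p; cases q) auto
  then show ?thesis
  proof
    assume h: "q = p \<and> grid_adj (a,b,c) (a',b',c')"
    then have "(\<bar>a - a'\<bar> = 1 \<and> b = b' \<and> c = c') \<or> (a = a' \<and> \<bar>b - b'\<bar> = 1 \<and> c = c') \<or> (a = a' \<and> b = b' \<and> \<bar>c - c'\<bar> = 1)"
      by (simp add: grid_adj_iff)
    then show ?thesis using h abs1[of a a'] abs1[of b b'] abs1[of c c'] unfolding yy
      by auto
  next
    assume "(a,b,c) = (a',b',c') \<and> q \<noteq> p \<and> (p = None \<or> q = None)"
    then show ?thesis unfolding yy by auto
  qed
qed

lemma out_nbrs:
  assumes v: "((a,b,c),p) \<in> tV k1 k2 k3 B" and t: "tadj k1 k2 k3 B ((a,b,c),p) y"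
    and lt: "Di ((a,b,c),p) ((0,0,0),None) < Di y ((0,0,0),None)"
  shows "y \<in> set [((a+1,b,c),p), ((a,b+1,c),p), ((a,b,c+1),p)]
     \<or> (p = None \<and> fst y = (a,b,c) \<and> snd y \<noteq> None)"
proof -
  obtain a' b' c' q where yy: "y = ((a',b',c'),q)" by (cases y) auto
  have yt: "((a',b',c'),q) \<in> tV k1 k2 k3 B" using t tadj_tV yy by blast
  have lt': "a+b+c+ind p None < a'+b'+c'+ind q None"
    using lt Di_alpha_tV[OF v] Di_alpha_tV[OF yt] yy by simp
  show ?thesis using nbrs[OF t] lt' unfolding yy by (auto simp: ind_def)
qed

lemma card_bound:
  assumes "finite I" "{y. P y} \<subseteq> set xs \<union> g ` I"
  shows "card {y. P y} \<le> length xs + card I"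
proof -
  have "card {y. P y} \<le> card (set xs \<union> g ` I)" using assms by (intro card_mono) auto
  also have "\<dots> \<le> card (set xs) + card (g ` I)" by (rule card_Un_le)
  also have "\<dots> \<le> length xs + card I" using card_length[of xs] card_image_le[OF assms(1), of g] by simp
  finally show ?thesis .
qed

lemma Iu_props:
  "{i. ((a,b,c),Some i) \<in> tV k1 k2 k3 B} \<subseteq> {..<length B} \<and>
   (\<forall>i\<in>{i. ((a,b,c),Some i) \<in> tV k1 k2 k3 B}. \<forall>j\<in>{i. ((a,b,c),Some i) \<in> tV k1 k2 k3 B}.
      i \<noteq> j \<longrightarrow> box_set (B!i) \<inter> box_set (B!j) \<noteq> {})"
  using tV_Some_box by blast

theorem lemma4:
  fixes k1 k2 k3 :: int and B :: "box list"
  assumes "k1 \<ge> 1" and "k2 \<ge> 1" and "k3 \<ge> 1"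
    and "\<forall>b \<in> set B. valid_box k1 k2 k3 b"
  shows "(\<forall>v \<in> tV k1 k2 k3 B.
            out_deg (tadj k1 k2 k3 B) ((0,0,0), None) v \<le> omega B + 3)
       \<and> (\<forall>v \<in> tV k1 k2 k3 B. degree (tadj k1 k2 k3 B) v \<le> omega B + 6)
       \<and> (\<forall>K \<subseteq> theta_classes (tadj k1 k2 k3 B).
            (\<forall>C\<in>K. \<forall>D\<in>K. C \<noteq> D \<longrightarrow> contact_adj (tadj k1 k2 k3 B) ((0,0,0), None) C D)
            \<longrightarrow> card K \<le> omega B + 3)"
proof (intro conjI ballI allI impI)
  have al: "((0,0,0),None) \<in> tV k1 k2 k3 B" using assms(1-3) by (simp add: tV_None grid_V_iff)
  {
    fix K assume "K \<subseteq> theta_classes (tadj k1 k2 k3 B)"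
      "\<forall>C\<in>K. \<forall>D\<in>K. C \<noteq> D \<longrightarrow> contact_adj (tadj k1 k2 k3 B) ((0,0,0), None) C D"
    then show "card K \<le> omega B + 3" using part3[OF al] by blast
  }
  fix v assume vt: "v \<in> tV k1 k2 k3 B"
  obtain a b c p where vv: "v = ((a,b,c),p)" by (cases v) auto
  define Iu where "Iu = {i. ((a,b,c),Some i) \<in> tV k1 k2 k3 B}"
  have Iu: "Iu \<subseteq> {..<length B}" "\<forall>i\<in>Iu. \<forall>j\<in>Iu. i \<noteq> j \<longrightarrow> box_set (B!i) \<inter> box_set (B!j) \<noteq> {}"
    using Iu_props[of a b c k1 k2 k3 B] unfolding Iu_def by blast+
  have finI: "finite Iu" using Iu(1) finite_subset by blast
  have om: "card Iu \<le> omega B" using omega_ge[OF Iu] .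
  {
    have sub: "{y. tadj k1 k2 k3 B v y \<and> gdist (tadj k1 k2 k3 B) v ((0,0,0),None) < gdist (tadj k1 k2 k3 B) y ((0,0,0),None)}
      \<subseteq> set [((a+1,b,c),p), ((a,b+1,c),p), ((a,b,c+1),p)] \<union> (\<lambda>i. ((a,b,c),Some i)) ` Iu"
    proof
      fix y assume "y \<in> {y. tadj k1 k2 k3 B v y \<and> gdist (tadj k1 k2 k3 B) v ((0,0,0),None) < gdist (tadj k1 k2 k3 B) y ((0,0,0),None)}"
      then have t: "tadj k1 k2 k3 B v y" and g: "gdist (tadj k1 k2 k3 B) v ((0,0,0),None) < gdist (tadj k1 k2 k3 B) y ((0,0,0),None)" by auto
      have yt: "y \<in> tV k1 k2 k3 B" using t tadj_tV by blast
      have lt: "Di v ((0,0,0),None) < Di y ((0,0,0),None)" using gdist_lt[OF vt yt al g] .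
      have "y \<in> set [((a+1,b,c),p), ((a,b+1,c),p), ((a,b,c+1),p)] \<or> (p = None \<and> fst y = (a,b,c) \<and> snd y \<noteq> None)"
        using out_nbrs[of a b c p k1 k2 k3 B y] vt t lt vv by simp
      then show "y \<in> set [((a+1,b,c),p), ((a,b+1,c),p), ((a,b,c+1),p)] \<union> (\<lambda>i. ((a,b,c),Some i)) ` Iu"
      proof
        assume h: "p = None \<and> fst y = (a,b,c) \<and> snd y \<noteq> None"
        then obtain i where y: "y = ((a,b,c),Some i)" by (cases y) auto
        then have "i \<in> Iu" using yt unfolding Iu_def by simp
        then show ?thesis using y by blast
      qed auto
    qed
    have sub2: "p \<noteq> None \<Longrightarrow> {y. tadj k1 k2 k3 B v y \<and> gdist (tadj k1 k2 k3 B) v ((0,0,0),None) < gdist (tadj k1 k2 k3 B) y ((0,0,0),None)}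
      \<subseteq> set [((a+1,b,c),p), ((a,b+1,c),p), ((a,b,c+1),p)] \<union> id ` {}"
    proof
      fix y assume pn: "p \<noteq> None" and "y \<in> {y. tadj k1 k2 k3 B v y \<and> gdist (tadj k1 k2 k3 B) v ((0,0,0),None) < gdist (tadj k1 k2 k3 B) y ((0,0,0),None)}"
      then have t: "tadj k1 k2 k3 B v y" and g: "gdist (tadj k1 k2 k3 B) v ((0,0,0),None) < gdist (tadj k1 k2 k3 B) y ((0,0,0),None)" by auto
      have yt: "y \<in> tV k1 k2 k3 B" using t tadj_tV by blast
      have lt: "Di v ((0,0,0),None) < Di y ((0,0,0),None)" using gdist_lt[OF vt yt al g] .
      show "y \<in> set [((a+1,b,c),p), ((a,b+1,c),p), ((a,b,c+1),p)] \<union> id ` {}"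
        using out_nbrs[of a b c p k1 k2 k3 B y] vt t lt vv pn by simp
    qed
    show "out_deg (tadj k1 k2 k3 B) ((0,0,0), None) v \<le> omega B + 3"
    proof (cases p)
      case None
      show ?thesis unfolding out_deg_def using card_bound[OF finI sub] om by simp
    next
      case (Some i)
      then show ?thesis unfolding out_deg_def using card_bound[OF _ sub2] by fastforce
    qed
  }
  {
    show "degree (tadj k1 k2 k3 B) v \<le> omega B + 6"
    proof (cases p)
      case None
      have sub: "{y. tadj k1 k2 k3 B v y} \<subseteq> set [((a+1,b,c),p), ((a-1,b,c),p), ((a,b+1,c),p), ((a,b-1,c),p), ((a,b,c+1),p), ((a,b,c-1),p)]
           \<union> (\<lambda>i. ((a,b,c),Some i)) ` Iu"
      proof
        fix y assume "y \<in> {y. tadj k1 k2 k3 B v y}"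
        then have t: "tadj k1 k2 k3 B v y" by simp
        have yt: "y \<in> tV k1 k2 k3 B" using t tadj_tV by blast
        have "y \<in> set [((a+1,b,c),p), ((a-1,b,c),p), ((a,b+1,c),p), ((a,b-1,c),p), ((a,b,c+1),p), ((a,b,c-1),p)]
     \<or> (fst y = (a,b,c) \<and> snd y \<noteq> p \<and> (p = None \<or> snd y = None))"
          using nbrs[of k1 k2 k3 B a b c p y] t vv by simp
        then show "y \<in> set [((a+1,b,c),p), ((a-1,b,c),p), ((a,b+1,c),p), ((a,b-1,c),p), ((a,b,c+1),p), ((a,b,c-1),p)]
           \<union> (\<lambda>i. ((a,b,c),Some i)) ` Iu"
        proof (elim disjE)
          assume h: "fst y = (a,b,c) \<and> snd y \<noteq> p \<and> (p = None \<or> snd y = None)"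
          then obtain i where y: "y = ((a,b,c),Some i)" using None by (cases y) auto
          then have "i \<in> Iu" using yt unfolding Iu_def by simp
          then show ?thesis using y by blast
        qed auto
      qed
      show ?thesis unfolding degree_def using card_bound[OF finI sub] om by simp
    next
      case (Some i)
      have sub: "{y. tadj k1 k2 k3 B v y} \<subseteq> set [((a+1,b,c),p), ((a-1,b,c),p), ((a,b+1,c),p), ((a,b-1,c),p), ((a,b,c+1),p), ((a,b,c-1),p), ((a,b,c),None)]
           \<union> id ` {}"
      proof
        fix y assume "y \<in> {y. tadj k1 k2 k3 B v y}"
        then have t: "tadj k1 k2 k3 B v y" by simp
        have "y \<in> set [((a+1,b,c),p), ((a-1,b,c),p), ((a,b+1,c),p), ((a,b-1,c),p), ((a,b,c+1),p), ((a,b,c-1),p)]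
     \<or> (fst y = (a,b,c) \<and> snd y \<noteq> p \<and> (p = None \<or> snd y = None))"
          using nbrs[of k1 k2 k3 B a b c p y] t vv by simp
        then show "y \<in> set [((a+1,b,c),p), ((a-1,b,c),p), ((a,b+1,c),p), ((a,b-1,c),p), ((a,b,c+1),p), ((a,b,c-1),p), ((a,b,c),None)]
           \<union> id ` {}"
          using Some by (cases y) auto
      qed
      have "i \<in> Iu" using vt vv Some unfolding Iu_def by simp
      then have "card {i} \<le> omega B" using Iu by (intro omega_ge) auto
      then show ?thesis unfolding degree_def using card_bound[OF _ sub] by fastforce
    qed
  }
qed


end
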